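(* Let $\pi$ be uniform on $\mathrm{PF}_n$ and let $L(\pi)$ be the number of lucky cars. Then for every real $x$, $$P\left(\frac{L(\pi)-n/2}{\sqrt{n/6}}\le x\right)\to\int_{-\infty}^x\frac{e^{-t^2/2}}{\sqrt{2\pi}}\,dt\qquad(n\to\infty).$$
   Context: A parking function of length $n$ is a sequence $(\pi_1,\dots,\pi_n)$ with $1\le\pi_i\le n$ such that $\#\{t:\pi_t\le i\}\ge i$ for all $1\le i\le n$; $\mathrm{PF}_n$ denotes the set of these. Parking process: there are spots $1,\dots,n$ in a line; cars $1,\dots,n$ arrive in order, car $i$ takes spot $\pi_i$ if free and otherwise the first free spot to its right (for $\pi\in\mathrm{PF}_n$ all cars park). Car $i$ is lucky if it parks in spot $\pi_i$; $L(\pi)$ is the number of lucky cars. *)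

theory Defs
  imports "HOL-Analysis.Analysis"
begin

definition PF :: "nat \<Rightarrow> nat list set" where
  "PF n = {p. length p = n \<and> (\<forall>i<n. 1 \<le> p ! i \<and> p ! i \<le> n) \<and>
              (\<forall>i\<in>{1..n}. card {t. t < n \<and> p ! t \<le> i} \<ge> i)}"

definition spot :: "nat set \<Rightarrow> nat \<Rightarrow> nat" where
  "spot occ s = (LEAST k. s \<le> k \<and> k \<notin> occ)"

fun lucky_aux :: "nat set \<Rightarrow> nat list \<Rightarrow> nat" where
  "lucky_aux occ [] = 0"
| "lucky_aux occ (s # ss) =
     (if spot occ s = s then 1 else 0) + lucky_aux (insert (spot occ s) occ) ss"

definition lucky :: "nat list \<Rightarrow> nat" where
  "lucky p = lucky_aux {} p"

end

theory Submission
  imports Defs "HOL-Probability.Probability" "HOL-Real_Asymp.Real_Asymp"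
begin

definition cspot :: "nat \<Rightarrow> nat set \<Rightarrow> nat \<Rightarrow> nat" where
  "cspot N occ s = (s + (LEAST j. (s + j) mod N \<notin> occ)) mod N"

fun cpos :: "nat \<Rightarrow> nat set \<Rightarrow> nat list \<Rightarrow> nat list" where
  "cpos N occ [] = []"
| "cpos N occ (s # ss) = cspot N occ s # cpos N (insert (cspot N occ s) occ) ss"

fun cluck :: "nat \<Rightarrow> nat set \<Rightarrow> nat list \<Rightarrow> nat" where
  "cluck N occ [] = 0"
| "cluck N occ (s # ss) = (if s \<in> occ then 0 else 1) + cluck N (insert (cspot N occ s) occ) ss"

lemma exists_free:
  assumes "occ \<subseteq> {..<N}" "card occ < N"
  shows "\<exists>k<N. k \<notin> occ"
proof (rule ccontr)
  assume "\<not> ?thesis"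
  then have "{..<N} \<subseteq> occ" by auto
  then have "N \<le> card occ" using assms(1) card_mono[of occ "{..<N}"]
    by (metis card_lessThan finite_lessThan subset_antisym order_refl)
  then show False using assms by simp
qed

lemma cspot_facts:
  assumes "occ \<subseteq> {..<N}" "card occ < N" "s < N"
  defines "j \<equiv> (LEAST j. (s + j) mod N \<notin> occ)"
  shows "cspot N occ s = (s + j) mod N" "(s + j) mod N \<notin> occ" "j < N"
    "\<And>j'. j' < j \<Longrightarrow> (s + j') mod N \<in> occ"
proof -
  obtain k where k: "k < N" "k \<notin> occ" using exists_free[OF assms(1,2)] by blast
  define j0 where "j0 = (k + N - s) mod N"
  have "s + (k + N - s) = k + N" using assms(3) by simp
  then have "(s + j0) mod N = k" using k unfolding j0_def by (simp add: mod_add_right_eq)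
  then have w: "(s + j0) mod N \<notin> occ" using k by simp
  show "cspot N occ s = (s + j) mod N" unfolding cspot_def j_def ..
  show "(s + j) mod N \<notin> occ" unfolding j_def by (rule LeastI[of "\<lambda>j. (s + j) mod N \<notin> occ", OF w])
  have "j \<le> j0" unfolding j_def by (rule Least_le[of "\<lambda>j. (s + j) mod N \<notin> occ", OF w])
  moreover have "j0 < N" unfolding j0_def using k by simp
  ultimately show "j < N" by simp
  show "\<And>j'. j' < j \<Longrightarrow> (s + j') mod N \<in> occ" unfolding j_def using not_less_Least by blast
qed

lemma cspot_basic:
  assumes "occ \<subseteq> {..<N}" "card occ < N" "s < N"
  shows "cspot N occ s < N" "cspot N occ s \<notin> occ" "cspot N occ s = s \<longleftrightarrow> s \<notin> occ"
proof -
  note f = cspot_facts[OF assms]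
  have N0: "N > 0" using assms by simp
  show "cspot N occ s < N" using f(1) N0 by simp
  show "cspot N occ s \<notin> occ" using f(1,2) by simp
  show "cspot N occ s = s \<longleftrightarrow> s \<notin> occ"
  proof
    assume "cspot N occ s = s" then show "s \<notin> occ" using f(1,2) by simp
  next
    assume a: "s \<notin> occ"
    have "(LEAST j. (s + j) mod N \<notin> occ) = 0"
      using a assms(3) by (intro Least_equality) auto
    then show "cspot N occ s = s" using f(1) assms(3) by simp
  qed
qed

lemma finite_occ: "occ \<subseteq> {..<(N::nat)} \<Longrightarrow> finite occ"
  using finite_subset by blast

lemma cpos_props:
  assumes "occ \<subseteq> {..<N}" "card occ + length ss \<le> N" "set ss \<subseteq> {..<N}"
  shows "set (cpos N occ ss) \<subseteq> {..<N} \<and> distinct (cpos N occ ss) \<and>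
         set (cpos N occ ss) \<inter> occ = {} \<and> length (cpos N occ ss) = length ss"
  using assms
proof (induction ss arbitrary: occ)
  case Nil then show ?case by simp
next
  case (Cons s ss)
  have c: "card occ < N" "s < N" using Cons.prems by auto
  note b = cspot_basic[OF Cons.prems(1) c]
  let ?o = "insert (cspot N occ s) occ"
  have fin: "finite occ" using finite_occ[OF Cons.prems(1)] .
  have "card ?o = Suc (card occ)" using b(2) fin by simp
  then have "?o \<subseteq> {..<N}" "card ?o + length ss \<le> N" "set ss \<subseteq> {..<N}"
    using Cons.prems b(1) by auto
  note IH = Cons.IH[OF this]
  show ?case using IH b by auto
qed

lemma lists_Suc_eq:
  "{xs. set xs \<subseteq> A \<and> length xs = Suc m} = (\<lambda>(a, xs). a # xs) ` (A \<times> {xs. set xs \<subseteq> A \<and> length xs = m})"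
proof (intro set_eqI iffI)
  fix xs assume "xs \<in> {xs. set xs \<subseteq> A \<and> length xs = Suc m}"
  then show "xs \<in> (\<lambda>(a, xs). a # xs) ` (A \<times> {xs. set xs \<subseteq> A \<and> length xs = m})"
    by (cases xs) (auto intro!: image_eqI[where x="(hd xs, tl xs)"])
qed auto

lemma sum_lists_Suc:
  fixes g :: "nat list \<Rightarrow> 'b::comm_monoid_add"
  shows "(\<Sum>xs\<in>{xs. set xs \<subseteq> A \<and> length xs = Suc m}. g xs) =
         (\<Sum>a\<in>A. \<Sum>xs\<in>{xs. set xs \<subseteq> A \<and> length xs = m}. g (a # xs))"
proof -
  have inj: "inj_on (\<lambda>(a, xs). a # xs) (A \<times> {xs. set xs \<subseteq> A \<and> length xs = m})"
    by (auto simp: inj_on_def)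
  show ?thesis
    unfolding lists_Suc_eq sum.reindex[OF inj]
    by (simp add: sum.cartesian_product case_prod_beta)
qed

lemma gf_cluck:
  fixes z :: "'a::comm_ring_1"
  assumes "occ \<subseteq> {..<N}" "card occ + m \<le> N"
  shows "(\<Sum>xs\<in>{xs. set xs \<subseteq> {..<N} \<and> length xs = m}. z ^ cluck N occ xs) =
         (\<Prod>i<m. of_nat (N - card occ - i) * z + of_nat (card occ + i))"
  using assms
proof (induction m arbitrary: occ)
  case 0
  have "{xs. set xs \<subseteq> {..<N} \<and> length xs = 0} = {[]}" by auto
  then show ?case by simp
next
  case (Suc m)
  have fin: "finite occ" using finite_occ[OF Suc.prems(1)] .
  let ?S = "{xs. set xs \<subseteq> {..<N} \<and> length xs = m}"
  let ?P = "(\<Prod>i<m. of_nat (N - (card occ + 1) - i) * z + of_nat (card occ + 1 + i)) :: 'a"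
  have inner: "(\<Sum>xs\<in>?S. z ^ cluck N occ (a # xs)) = z ^ (if a \<in> occ then 0 else 1) * ?P"
    if a: "a < N" for a
  proof -
    have c: "card occ < N" using Suc.prems by simp
    note b = cspot_basic[OF Suc.prems(1) c a]
    let ?o = "insert (cspot N occ a) occ"
    have co: "card ?o = card occ + 1" using b(2) fin by simp
    have "?o \<subseteq> {..<N}" "card ?o + m \<le> N" using Suc.prems b(1) co by auto
    note IH = Suc.IH[OF this]
    have "(\<Sum>xs\<in>?S. z ^ cluck N occ (a # xs)) = (\<Sum>xs\<in>?S. z ^ (if a \<in> occ then 0 else 1) * z ^ cluck N ?o xs)"
      by (simp add: power_add)
    also have "\<dots> = z ^ (if a \<in> occ then 0 else 1) * (\<Sum>xs\<in>?S. z ^ cluck N ?o xs)"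
      by (simp add: sum_distrib_left)
    also have "\<dots> = z ^ (if a \<in> occ then 0 else 1) * ?P" using IH co by simp
    finally show ?thesis .
  qed
  have "(\<Sum>xs\<in>{xs. set xs \<subseteq> {..<N} \<and> length xs = Suc m}. z ^ cluck N occ xs)
      = (\<Sum>a\<in>{..<N}. z ^ (if a \<in> occ then 0 else 1) * ?P)"
    unfolding sum_lists_Suc by (rule sum.cong[OF refl], rule inner, simp)
  also have "\<dots> = (\<Sum>a\<in>{..<N}. (if a \<in> occ then 1 else z)) * ?P"
    by (simp add: sum_distrib_right if_distrib cong: if_cong)
  also have "(\<Sum>a\<in>{..<N}. (if a \<in> occ then 1 else z)) = of_nat (card occ) + of_nat (N - card occ) * z"
  proof -
    have "(\<Sum>a\<in>{..<N}. (if a \<in> occ then 1 else z)) = (\<Sum>a\<in>occ. 1) + (\<Sum>a\<in>{..<N} - occ. z)"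
      using Suc.prems(1) by (simp add: sum.If_cases Int_absorb1 Diff_eq)
    also have "\<dots> = of_nat (card occ) + of_nat (N - card occ) * z"
      using Suc.prems(1) fin by (simp add: card_Diff_subset)
    finally show ?thesis .
  qed
  also have "(of_nat (card occ) + of_nat (N - card occ) * z) * ?P =
     (\<Prod>i<Suc m. of_nat (N - card occ - i) * z + of_nat (card occ + i))"
    unfolding prod.lessThan_Suc_shift by (simp add: algebra_simps)
  finally show ?case .
qed

lemma cpos_arc:
  assumes "occ \<subseteq> {..<N}" "card occ + length ss \<le> N" "set ss \<subseteq> {..<N}" "t < length ss"
  shows "\<exists>j. cpos N occ ss ! t = (ss ! t + j) mod N \<and>
             (\<forall>j'\<le>j. (ss ! t + j') mod N \<in> occ \<union> set (cpos N occ ss))"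
  using assms
proof (induction ss arbitrary: occ t)
  case Nil then show ?case by simp
next
  case (Cons s ss)
  have c: "card occ < N" "s < N" using Cons.prems by auto
  note b = cspot_basic[OF Cons.prems(1) c]
  note f = cspot_facts[OF Cons.prems(1) c]
  let ?o = "insert (cspot N occ s) occ"
  have fin: "finite occ" using finite_occ[OF Cons.prems(1)] .
  have "card ?o = Suc (card occ)" using b(2) fin by simp
  then have o: "?o \<subseteq> {..<N}" "card ?o + length ss \<le> N" "set ss \<subseteq> {..<N}"
    using Cons.prems b(1) by auto
  show ?case
  proof (cases t)
    case 0
    let ?J = "LEAST j. (s + j) mod N \<notin> occ"
    show ?thesis
    proof (intro exI conjI allI impI)
      show "cpos N occ (s # ss) ! t = ((s # ss) ! t + ?J) mod N" using 0 f(1) by simp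
      fix j' assume "j' \<le> ?J"
      then consider "j' < ?J" | "j' = ?J" by linarith
      then show "((s # ss) ! t + j') mod N \<in> occ \<union> set (cpos N occ (s # ss))"
      proof cases
        case 1 then show ?thesis using f(4) 0 by simp
      next
        case 2 then show ?thesis using f(1) 0 by simp
      qed
    qed
  next
    case (Suc t')
    then have "t' < length ss" using Cons.prems by simp
    from Cons.IH[OF o this] obtain j where j: "cpos N ?o ss ! t' = (ss ! t' + j) mod N"
      "\<forall>j'\<le>j. (ss ! t' + j') mod N \<in> ?o \<union> set (cpos N ?o ss)" by blast
    show ?thesis
      using j Suc by (intro exI[of _ j]) auto
  qed
qed

definition rs :: "nat \<Rightarrow> nat \<Rightarrow> nat set \<Rightarrow> nat set" where
  "rs N c A = (\<lambda>v. (v + c) mod N) ` A"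

definition rotl :: "nat \<Rightarrow> nat \<Rightarrow> nat list \<Rightarrow> nat list" where
  "rotl N c xs = map (\<lambda>v. (v + c) mod N) xs"

lemma unrot:
  fixes x N c :: nat
  assumes "x < N"
  shows "((x + c) mod N + (N - c mod N)) mod N = x"
proof -
  have N0: "N > 0" using assms by simp
  have "c mod N \<le> N" using N0 by (simp add: less_imp_le)
  have "x + c + (N - c mod N) = x + N * Suc (c div N)"
  proof -
    have "N * Suc (c div N) = N + c div N * N" by simp
    then show ?thesis using \<open>c mod N \<le> N\<close> div_mult_mod_eq[of c N] by linarith
  qed
  moreover have "((x + c) mod N + (N - c mod N)) mod N = (x + c + (N - c mod N)) mod N"
    by (rule mod_add_left_eq)
  ultimately have "((x + c) mod N + (N - c mod N)) mod N = (x + N * Suc (c div N)) mod N"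
    by metis
  also have "\<dots> = x" using assms by (metis mod_less mod_mult_self2)
  finally show ?thesis .
qed

lemma rot_inj:
  fixes x y N c :: nat
  assumes "x < N" "y < N" "(x + c) mod N = (y + c) mod N"
  shows "x = y"
  by (metis unrot[OF assms(1), of c] unrot[OF assms(2), of c] assms(3))

lemma rot_mem:
  assumes "x < N" "A \<subseteq> {..<N}"
  shows "(x + c) mod N \<in> rs N c A \<longleftrightarrow> x \<in> A"
proof
  assume "(x + c) mod N \<in> rs N c A"
  then obtain y where y: "y \<in> A" "(x + c) mod N = (y + c) mod N" unfolding rs_def by blast
  then have "y < N" using assms(2) by blast
  then have "x = y" using rot_inj[OF assms(1) _ y(2)] by blast
  then show "x \<in> A" using y by simp
next
  assume "x \<in> A" then show "(x + c) mod N \<in> rs N c A" unfolding rs_def by blast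
qed

lemma rs_sub: "A \<subseteq> {..<N} \<Longrightarrow> rs N c A \<subseteq> {..<N}"
  unfolding rs_def by auto

lemma rs_card: "A \<subseteq> {..<N} \<Longrightarrow> card (rs N c A) = card A"
  unfolding rs_def
proof (rule card_image, rule inj_onI)
  fix x y assume "A \<subseteq> {..<N}" "x \<in> A" "y \<in> A" "(x + c) mod N = (y + c) mod N"
  then show "x = y" using rot_inj[of x N y c] by blast
qed

lemma cspot_rot:
  assumes "occ \<subseteq> {..<N}" "card occ < N" "s < N"
  shows "cspot N (rs N c occ) ((s + c) mod N) = (cspot N occ s + c) mod N"
proof -
  have e: "((s + c) mod N + j) mod N = ((s + j) mod N + c) mod N" for j
    by (simp add: mod_add_left_eq mod_add_right_eq algebra_simps)
  have "(\<lambda>j. ((s + c) mod N + j) mod N \<notin> rs N c occ) = (\<lambda>j. (s + j) mod N \<notin> occ)"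
  proof
    fix j
    have "(s + j) mod N < N" using assms by simp
    then show "(((s + c) mod N + j) mod N \<notin> rs N c occ) = ((s + j) mod N \<notin> occ)"
      unfolding e using rot_mem[OF _ assms(1)] by blast
  qed
  then have L: "(LEAST j. ((s + c) mod N + j) mod N \<notin> rs N c occ) = (LEAST j. (s + j) mod N \<notin> occ)"
    by (rule arg_cong[where f=Least])
  show ?thesis unfolding cspot_def L by (rule e)
qed

lemma rot_process:
  assumes "occ \<subseteq> {..<N}" "card occ + length ss \<le> N" "set ss \<subseteq> {..<N}"
  shows "cpos N (rs N c occ) (rotl N c ss) = rotl N c (cpos N occ ss) \<and>
         cluck N (rs N c occ) (rotl N c ss) = cluck N occ ss"
  using assms
proof (induction ss arbitrary: occ)
  case Nil then show ?case by (simp add: rotl_def)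
next
  case (Cons s ss)
  have c: "card occ < N" "s < N" using Cons.prems by auto
  note b = cspot_basic[OF Cons.prems(1) c]
  let ?o = "insert (cspot N occ s) occ"
  have fin: "finite occ" using finite_occ[OF Cons.prems(1)] .
  have "card ?o = Suc (card occ)" using b(2) fin by simp
  then have o: "?o \<subseteq> {..<N}" "card ?o + length ss \<le> N" "set ss \<subseteq> {..<N}"
    using Cons.prems b(1) by auto
  note IH = Cons.IH[OF o]
  have r: "rs N c ?o = insert (cspot N (rs N c occ) ((s + c) mod N)) (rs N c occ)"
    using cspot_rot[OF Cons.prems(1) c] unfolding rs_def by simp
  have m: "(s + c) mod N \<in> rs N c occ \<longleftrightarrow> s \<in> occ" using rot_mem[OF c(2) Cons.prems(1)] .
  show ?case
    using IH r m cspot_rot[OF Cons.prems(1) c] by (simp add: rotl_def)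
qed

lemma spot_eq_cspot:
  assumes "occ \<subseteq> {..<N}" "card occ < N" "s < N" "0 \<notin> occ" "cspot N occ s \<noteq> 0"
  shows "spot occ s = cspot N occ s"
proof -
  note f = cspot_facts[OF assms(1-3)]
  note b = cspot_basic[OF assms(1-3)]
  define J where "J = (LEAST j. (s + j) mod N \<notin> occ)"
  have s0: "s \<noteq> 0" using b(3) assms(4,5) by auto
  have "(s + (N - s)) mod N \<notin> occ" using assms(3,4) by simp
  then have "J \<le> N - s" unfolding J_def by (rule Least_le[of "\<lambda>j. (s + j) mod N \<notin> occ"])
  moreover have "J \<noteq> N - s" using f(1) assms(3,5) unfolding J_def by auto
  ultimately have lt: "s + J < N" using assms(3) by linarith
  then have cs: "cspot N occ s = s + J" using f(1) unfolding J_def by simp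
  have "spot occ s = s + J"
    unfolding spot_def
  proof (rule Least_equality)
    show "s \<le> s + J \<and> s + J \<notin> occ" using f(2) lt unfolding J_def by simp
  next
    fix k assume k: "s \<le> k \<and> k \<notin> occ"
    show "s + J \<le> k"
    proof (rule ccontr)
      assume "\<not> s + J \<le> k"
      then have "k - s < J" "k < N" using k lt by auto
      then have "(s + (k - s)) mod N \<in> occ" using f(4) unfolding J_def by blast
      then show False using k \<open>k < N\<close> by simp
    qed
  qed
  then show ?thesis using cs by simp
qed

lemma lucky_eq:
  assumes "occ \<subseteq> {..<N}" "card occ + length ss \<le> N" "set ss \<subseteq> {..<N}"
    "0 \<notin> occ \<union> set (cpos N occ ss)"
  shows "lucky_aux occ ss = cluck N occ ss"
  using assms
proof (induction ss arbitrary: occ)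
  case Nil then show ?case by simp
next
  case (Cons s ss)
  have c: "card occ < N" "s < N" using Cons.prems by auto
  note b = cspot_basic[OF Cons.prems(1) c]
  let ?o = "insert (cspot N occ s) occ"
  have fin: "finite occ" using finite_occ[OF Cons.prems(1)] .
  have "card ?o = Suc (card occ)" using b(2) fin by simp
  then have o: "?o \<subseteq> {..<N}" "card ?o + length ss \<le> N" "set ss \<subseteq> {..<N}"
    "0 \<notin> ?o \<union> set (cpos N ?o ss)"
    using Cons.prems b(1) by auto
  note IH = Cons.IH[OF o]
  have sp: "spot occ s = cspot N occ s"
    using spot_eq_cspot[OF Cons.prems(1) c] Cons.prems(4) by auto
  show ?case using IH sp b(3) by simp
qed

lemma card_idx:
  assumes "distinct xs"
  shows "card {t. t < length xs \<and> P (xs ! t)} = card {v \<in> set xs. P v}"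
proof -
  have "nth xs ` {t. t < length xs \<and> P (xs ! t)} = {v \<in> set xs. P v}"
    by (auto simp: in_set_conv_nth)
  moreover have "inj_on (nth xs) {t. t < length xs \<and> P (xs ! t)}"
    using assms by (auto simp: inj_on_def nth_eq_iff_index_eq)
  ultimately show ?thesis using card_image by fastforce
qed

lemma PF_char:
  "p \<in> PF n \<longleftrightarrow> set p \<subseteq> {..<Suc n} \<and> length p = n \<and> 0 \<notin> set (cpos (Suc n) {} p)"
proof -
  let ?N = "Suc n"
  have props: "set (cpos ?N {} p) \<subseteq> {..<?N} \<and> distinct (cpos ?N {} p) \<and> length (cpos ?N {} p) = n"
    if "set p \<subseteq> {..<?N}" "length p = n"
    using cpos_props[of "{}" ?N p] that by auto
  show ?thesis
  proof
    assume p: "p \<in> PF n"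
    then have len: "length p = n" and vals: "\<And>i. i < n \<Longrightarrow> 1 \<le> p ! i \<and> p ! i \<le> n"
      and cnt: "\<And>i. i \<in> {1..n} \<Longrightarrow> card {t. t < n \<and> p ! t \<le> i} \<ge> i"
      unfolding PF_def by auto
    have sp: "set p \<subseteq> {..<?N}" using vals len by (fastforce simp: in_set_conv_nth less_Suc_eq_le)
    let ?pos = "cpos ?N {} p"
    let ?F = "set ?pos"
    note pr = props[OF sp len]
    have cF: "card ?F = n" using pr distinct_card by metis
    have "0 \<notin> ?F"
    proof
      assume "0 \<in> ?F"
      have "card ?F < card {..<?N}" using cF by simp
      have "\<not> {..<?N} \<subseteq> ?F"
      proof
        assume "{..<?N} \<subseteq> ?F"
        then have "card {..<?N} \<le> card ?F" by (intro card_mono) auto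
        then show False using cF by simp
      qed
      then obtain e where e: "e < ?N" "e \<notin> ?F" by blast
      have e1: "e \<in> {1..n}" using e \<open>0 \<in> ?F\<close> by (cases e) auto
      let ?T = "{t. t < n \<and> p ! t \<le> e}"
      have "?T \<subseteq> {t. t < length ?pos \<and> ?pos ! t \<in> {1..<e}}"
      proof
        fix t assume t: "t \<in> ?T"
        then have tl: "t < length p" using len by simp
        from cpos_arc[of "{}" ?N p t] sp tl len obtain j where
          j: "?pos ! t = (p ! t + j) mod ?N" "\<forall>j'\<le>j. (p ! t + j') mod ?N \<in> ?F"
          by auto
        have "p ! t + j < e"
        proof (rule ccontr)
          assume "\<not> p ! t + j < e"
          then have "e - p ! t \<le> j" by simp
          then have "(p ! t + (e - p ! t)) mod ?N \<in> ?F" using j(2) by blast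
          then show False using t e by simp
        qed
        moreover have "1 \<le> p ! t" using vals t by simp
        ultimately show "t \<in> {t. t < length ?pos \<and> ?pos ! t \<in> {1..<e}}"
          using j(1) e t pr by auto
      qed
      then have "card ?T \<le> card {t. t < length ?pos \<and> ?pos ! t \<in> {1..<e}}"
        by (intro card_mono) auto
      also have "\<dots> = card {v \<in> ?F. v \<in> {1..<e}}" using card_idx[of ?pos "\<lambda>v. v \<in> {1..<e}"] pr by blast
      also have "\<dots> \<le> card {1..<e}" by (intro card_mono) auto
      also have "\<dots> = e - 1" by simp
      finally show False using cnt[OF e1] e1 by (simp del: One_nat_def) linarith
    qed
    then show "set p \<subseteq> {..<?N} \<and> length p = n \<and> 0 \<notin> set (cpos ?N {} p)" using sp len by simp
  next
    assume a: "set p \<subseteq> {..<?N} \<and> length p = n \<and> 0 \<notin> set (cpos ?N {} p)"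
    then have sp: "set p \<subseteq> {..<?N}" and len: "length p = n" and z: "0 \<notin> set (cpos ?N {} p)" by auto
    let ?pos = "cpos ?N {} p"
    let ?F = "set ?pos"
    note pr = props[OF sp len]
    have cF: "card ?F = n" using pr distinct_card by metis
    have "?F \<subseteq> {1..n}"
    proof
      fix x assume "x \<in> ?F"
      then have "x < Suc n" "x \<noteq> 0" using pr z by auto (metis gr0I)
      then show "x \<in> {1..n}" by simp
    qed
    then have Feq: "?F = {1..n}" using cF by (intro card_subset_eq) auto
    have arc: "1 \<le> p ! t \<and> p ! t \<le> ?pos ! t" if t: "t < n" for t
    proof -
      from cpos_arc[of "{}" ?N p t] sp t len obtain j where
        j: "?pos ! t = (p ! t + j) mod ?N" "\<forall>j'\<le>j. (p ! t + j') mod ?N \<in> ?F"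
        by auto
      have pt: "p ! t < ?N" using sp t len nth_mem[of t p] by (auto simp del: nth_mem)
      have "p ! t + j < ?N"
      proof (rule ccontr)
        assume "\<not> p ! t + j < ?N"
        then have "?N - p ! t \<le> j" by simp
        then have "(p ! t + (?N - p ! t)) mod ?N \<in> ?F" using j(2) by blast
        then show False using z pt by simp
      qed
      moreover have "p ! t \<in> ?F" using j(2)[rule_format, of 0] pt by simp
      ultimately show ?thesis using j(1) z by (cases "p ! t") auto
    qed
    show "p \<in> PF n"
      unfolding PF_def
    proof (intro CollectI conjI allI impI ballI)
      show "length p = n" by fact
      fix i assume "i < n"
      then show "1 \<le> p ! i" "p ! i \<le> n" using arc[of i] Feq nth_mem[of i ?pos] pr by auto
    next
      fix i assume i: "i \<in> {1..n}"
      have "i = card {1..i}" by simp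
      also have "{1..i} = {v \<in> ?F. v \<le> i}" using Feq i by auto
      also have "card \<dots> = card {t. t < length ?pos \<and> ?pos ! t \<le> i}" using card_idx[of ?pos "\<lambda>v. v \<le> i"] pr by simp
      also have "\<dots> \<le> card {t. t < n \<and> p ! t \<le> i}"
        using arc pr by (intro card_mono) (auto intro: order_trans)
      finally show "i \<le> card {t. t < n \<and> p ! t \<le> i}" .
    qed
  qed
qed

lemma finite_PF: "finite (PF n)"
proof -
  have "PF n \<subseteq> {xs. set xs \<subseteq> {..<Suc n} \<and> length xs = n}" using PF_char by auto
  then show ?thesis by (rule finite_subset) (rule finite_lists_length_eq, simp)
qed

lemma gf_PF:
  fixes z :: "'a::comm_ring_1"
  shows "of_nat (Suc n) * (\<Sum>p\<in>PF n. z ^ lucky p) = (\<Prod>i<n. of_nat (Suc n - i) * z + of_nat i)"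
proof -
  let ?N = "Suc n"
  let ?S = "{xs. set xs \<subseteq> {..<?N} \<and> length xs = n}"
  let ?F = "\<lambda>xs. set (cpos ?N {} xs)"
  let ?g = "\<lambda>xs. z ^ cluck ?N {} xs"
  define A where "A c = {xs \<in> ?S. c \<notin> ?F xs}" for c
  have finS: "finite ?S" by (rule finite_lists_length_eq) simp
  have props: "?F xs \<subseteq> {..<?N} \<and> card (?F xs) = n" if "xs \<in> ?S" for xs
    using cpos_props[of "{}" ?N xs] that distinct_card by fastforce
  have one: "(\<Sum>c<?N. if c \<notin> ?F xs then ?g xs else 0) = ?g xs" if "xs \<in> ?S" for xs
  proof -
    have "(\<Sum>c<?N. if c \<notin> ?F xs then ?g xs else 0) = (\<Sum>c\<in>{..<?N} \<inter> {c. c \<notin> ?F xs}. ?g xs)"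
      by (simp only: sum.If_cases[OF finite_lessThan] sum.neutral_const add_0_right)
    also have "{..<?N} \<inter> {c. c \<notin> ?F xs} = {..<?N} - ?F xs" by auto
    also have "(\<Sum>c\<in>{..<?N} - ?F xs. ?g xs) = of_nat (card ({..<?N} - ?F xs)) * ?g xs" by simp
    also have "card ({..<?N} - ?F xs) = 1" using props[OF that] by (simp add: card_Diff_subset)
    finally show ?thesis by simp
  qed
  have "(\<Sum>xs\<in>?S. ?g xs) = (\<Sum>xs\<in>?S. \<Sum>c<?N. if c \<notin> ?F xs then ?g xs else 0)"
    using one by simp
  also have "\<dots> = (\<Sum>c<?N. \<Sum>xs\<in>?S. if c \<notin> ?F xs then ?g xs else 0)" by (rule sum.swap)
  also have "\<dots> = (\<Sum>c<?N. \<Sum>xs\<in>A c. ?g xs)"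
    unfolding A_def by (rule sum.cong[OF refl]) (simp only: sum.inter_filter[OF finS])
  also have "\<dots> = (\<Sum>c<?N. \<Sum>xs\<in>A 0. ?g xs)"
  proof (rule sum.cong[OF refl])
    fix c assume c: "c \<in> {..<?N}"
    have rotS: "rotl ?N d xs \<in> ?S" if "xs \<in> ?S" for d xs
      using that by (auto simp: rotl_def)
    have Frot: "?F (rotl ?N d xs) = rs ?N d (?F xs)" if "xs \<in> ?S" for d xs
    proof -
      have "rs ?N d {} = {}" by (simp add: rs_def)
      then have "cpos ?N {} (rotl ?N d xs) = rotl ?N d (cpos ?N {} xs)"
        using rot_process[of "{}" ?N xs d] that by auto
      then show ?thesis by (simp add: rotl_def rs_def)
    qed
    have eq: "A c = rotl ?N c ` A 0"
    proof (intro set_eqI iffI)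
      fix xs assume xs: "xs \<in> A c"
      then have xS: "xs \<in> ?S" unfolding A_def by simp
      define d where "d = ?N - c"
      have bk: "rotl ?N c (rotl ?N d xs) = xs"
      proof -
        have "((v + d) mod ?N + c) mod ?N = v" if "v < ?N" for v
          using that c unfolding d_def by (simp add: mod_add_left_eq) (metis add_Suc_right mod_add_self2 mod_less)
        then show ?thesis using xS unfolding rotl_def by (auto intro: map_idI simp: subset_iff)
      qed
      have "0 \<notin> ?F (rotl ?N d xs)"
      proof
        assume "0 \<in> ?F (rotl ?N d xs)"
        then have "(c + d) mod ?N \<in> rs ?N d (?F xs)" using Frot[OF xS] c unfolding d_def by simp
        then have "c \<in> ?F xs" using rot_mem[of c ?N "?F xs" d] props[OF xS] c by simp
        then show False using xs unfolding A_def by simp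
      qed
      then have "rotl ?N d xs \<in> A 0" unfolding A_def using rotS[OF xS] by simp
      then show "xs \<in> rotl ?N c ` A 0" using bk by force
    next
      fix xs assume "xs \<in> rotl ?N c ` A 0"
      then obtain ys where ys: "ys \<in> A 0" "xs = rotl ?N c ys" by blast
      then have yS: "ys \<in> ?S" unfolding A_def by simp
      have "c \<notin> rs ?N c (?F ys)"
        using rot_mem[of 0 ?N "?F ys" c] props[OF yS] ys c unfolding A_def by simp
      then show "xs \<in> A c" unfolding A_def using ys Frot[OF yS] rotS[OF yS] by simp
    qed
    have inj: "inj_on (rotl ?N c) (A 0)"
    proof (rule inj_onI)
      fix xs ys assume xs: "xs \<in> A 0" and ys: "ys \<in> A 0" and e: "rotl ?N c xs = rotl ?N c ys"
      have "length xs = length ys" using e unfolding rotl_def by (metis length_map)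
      moreover have "xs ! i = ys ! i" if "i < length xs" for i
      proof -
        have "(xs ! i + c) mod ?N = (ys ! i + c) mod ?N"
          using e that \<open>length xs = length ys\<close> unfolding rotl_def by (metis nth_map)
        moreover have "xs ! i < ?N" "ys ! i < ?N" using xs ys that \<open>length xs = length ys\<close>
            nth_mem[of i xs] nth_mem[of i ys]
          unfolding A_def by (auto simp del: nth_mem)
        ultimately show ?thesis using rot_inj by blast
      qed
      ultimately show "xs = ys" by (simp add: list_eq_iff_nth_eq)
    qed
    have inv: "?g (rotl ?N c xs) = ?g xs" if "xs \<in> A 0" for xs
    proof -
      have "rs ?N c {} = {}" by (simp add: rs_def)
      then show ?thesis using rot_process[of "{}" ?N xs c] that unfolding A_def by auto
    qed
    show "(\<Sum>xs\<in>A c. ?g xs) = (\<Sum>xs\<in>A 0. ?g xs)"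
      unfolding eq sum.reindex[OF inj] by (simp add: inv)
  qed
  also have "\<dots> = of_nat ?N * (\<Sum>xs\<in>A 0. ?g xs)" by simp
  also have "A 0 = PF n" unfolding A_def using PF_char by auto
  also have "(\<Sum>xs\<in>PF n. ?g xs) = (\<Sum>p\<in>PF n. z ^ lucky p)"
  proof (rule sum.cong[OF refl])
    fix p assume "p \<in> PF n"
    then have "set p \<subseteq> {..<?N}" "length p = n" "0 \<notin> set (cpos ?N {} p)" using PF_char by auto
    then show "?g p = z ^ lucky p" unfolding lucky_def using lucky_eq[of "{}" ?N p] by simp
  qed
  finally have "(\<Sum>xs\<in>?S. ?g xs) = of_nat ?N * (\<Sum>p\<in>PF n. z ^ lucky p)" .
  moreover have "(\<Sum>xs\<in>?S. ?g xs) = (\<Prod>i<n. of_nat (?N - i) * z + of_nat i)"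
    using gf_cluck[of "{}" ?N n z] by simp
  ultimately show ?thesis by simp
qed


definition phi :: "real \<Rightarrow> real \<Rightarrow> complex" where
  "phi q x = complex_of_real q * iexp (x * (1 - q)) + complex_of_real (1 - q) * iexp (- x * q)"

lemma phi_factor:
  "complex_of_real q * iexp x + complex_of_real (1 - q) = iexp (x * q) * phi q x"
proof -
  have "iexp (x * q) * iexp (x * (1 - q)) = iexp x"
    by (simp add: exp_add[symmetric] algebra_simps)
  moreover have "iexp (x * q) * iexp (- x * q) = 1"
    by (simp add: exp_add[symmetric] algebra_simps)
  ultimately show ?thesis unfolding phi_def by (simp add: algebra_simps)
qed

lemma iexp_taylor2: "cmod (iexp x - (1 + \<i> * x - x^2 / 2)) \<le> \<bar>x\<bar>^3 / 6"
proof -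
  have "(\<Sum>k \<le> 2. (\<i> * x)^k / fact k) = 1 + \<i> * x - complex_of_real (x^2 / 2)"
    by (simp add: numeral_2_eq_2 power2_eq_square fact_numeral field_simps)
  then show ?thesis using iexp_approx1[of x 2]
    by (simp add: numeral_3_eq_3 fact_numeral)
qed

lemma phi_approx:
  assumes "0 \<le> q" "q \<le> 1"
  shows "cmod (phi q x - (1 - q * (1 - q) * x^2 / 2)) \<le> \<bar>x\<bar>^3 / 6"
proof -
  define a where "a = x * (1 - q)"
  define b where "b = - x * q"
  define Ta where "Ta = 1 + \<i> * a - a^2 / 2"
  define Tb where "Tb = 1 + \<i> * b - b^2 / 2"
  have alg: "complex_of_real q * Ta + complex_of_real (1 - q) * Tb = 1 - q * (1 - q) * x^2 / 2"
    unfolding Ta_def Tb_def a_def b_def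
    by (simp add: complex_eq_iff power2_eq_square field_simps)
  have "phi q x - (1 - q * (1 - q) * x^2 / 2) =
     complex_of_real q * (iexp a - Ta) + complex_of_real (1 - q) * (iexp b - Tb)"
    unfolding phi_def a_def b_def alg[symmetric] by (simp add: algebra_simps)
  also have "cmod \<dots> \<le> q * (\<bar>a\<bar>^3 / 6) + (1 - q) * (\<bar>b\<bar>^3 / 6)"
  proof -
    have "cmod (complex_of_real q * (iexp a - Ta)) = q * cmod (iexp a - Ta)"
      using assms by (simp add: norm_mult)
    also have "\<dots> \<le> q * (\<bar>a\<bar>^3 / 6)"
      by (rule mult_left_mono[OF iexp_taylor2[of a, folded Ta_def]]) (use assms in simp)
    finally have 1: "cmod (complex_of_real q * (iexp a - Ta)) \<le> q * (\<bar>a\<bar>^3 / 6)" .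
    have "cmod (complex_of_real (1 - q) * (iexp b - Tb)) = (1 - q) * cmod (iexp b - Tb)"
      using assms by (simp add: norm_mult del: of_real_diff)
    also have "\<dots> \<le> (1 - q) * (\<bar>b\<bar>^3 / 6)"
      by (rule mult_left_mono[OF iexp_taylor2[of b, folded Tb_def]]) (use assms in simp)
    finally have 2: "cmod (complex_of_real (1 - q) * (iexp b - Tb)) \<le> (1 - q) * (\<bar>b\<bar>^3 / 6)" .
    show ?thesis using 1 2 by (meson norm_triangle_le add_mono)
  qed
  also have "\<dots> \<le> q * (\<bar>x\<bar>^3 / 6) + (1 - q) * (\<bar>x\<bar>^3 / 6)"
  proof -
    have "\<bar>a\<bar> \<le> \<bar>x\<bar>" "\<bar>b\<bar> \<le> \<bar>x\<bar>" unfolding a_def b_def using assms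
      by (auto simp: abs_mult intro: mult_left_le)
    then have "\<bar>a\<bar>^3 \<le> \<bar>x\<bar>^3" "\<bar>b\<bar>^3 \<le> \<bar>x\<bar>^3" by (auto intro: power_mono)
    then show ?thesis using assms by (intro add_mono mult_left_mono) auto
  qed
  also have "\<dots> = \<bar>x\<bar>^3 / 6" by (simp add: field_simps)
  finally show ?thesis .
qed

lemma phi_norm:
  assumes "0 \<le> q" "q \<le> 1"
  shows "cmod (phi q x) \<le> 1"
proof -
  have "cmod (phi q x) \<le> cmod (complex_of_real q * iexp (x * (1 - q))) + cmod (complex_of_real (1 - q) * iexp (- x * q))"
    unfolding phi_def by (rule norm_triangle_ineq)
  also have "\<dots> = q + (1 - q)" using assms by (simp add: norm_mult del: of_real_diff)
  finally show ?thesis by simp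
qed

lemma exp_minus_approx:
  fixes a :: real
  assumes "0 \<le> a" "a \<le> 1"
  shows "\<bar>(1 - a) - exp (- a)\<bar> \<le> a^2"
proof -
  have l: "1 - a \<le> exp (- a)" using exp_ge_add_one_self[of "-a"] by simp
  have "1 + a \<le> exp a" using exp_ge_add_one_self[of a] by simp
  then have "exp (- a) \<le> 1 / (1 + a)" using assms by (simp add: exp_minus field_simps)
  also have "1 / (1 + a) \<le> 1 - a + a^2" using assms
    by (simp add: field_simps power2_eq_square)
  finally show ?thesis using l by simp
qed

lemma sum_nat_real: "(\<Sum>i<n. real i) = real n * (real n - 1) / 2"
  by (induction n) (auto simp: field_simps)

lemma sum_sq_real: "(\<Sum>i<n. (real i)^2) = (real n - 1) * real n * (2 * real n - 1) / 6"
  by (induction n) (auto simp: field_simps power2_eq_square)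

lemma q_bounds:
  assumes "i < n"
  shows "0 \<le> 1 - real i / real (Suc n)" "1 - real i / real (Suc n) \<le> 1"
  using assms by (auto simp: field_simps)

lemma v_bound:
  fixes q :: real
  shows "q * (1 - q) \<le> 1 / 4"
proof -
  have "0 \<le> (q - 1/2)^2" by simp
  then show ?thesis by (simp add: power2_eq_square algebra_simps)
qed

lemma v_expand:
  fixes x N :: real
  assumes "N \<noteq> 0"
  shows "(1 - x / N) * (1 - (1 - x / N)) = x / N - x^2 / N^2"
  using assms by (simp add: field_simps power2_eq_square)

lemma sv_alg0:
  fixes d :: real
  assumes "d \<noteq> 0"
  shows "(d - 1) * (d - 2) / 2 / d - (d - 2) * (d - 1) * (2 * d - 3) / 6 / (d * d)
       = (d - 1) * (d - 2) * (d + 3) / (6 * (d * d))"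
  using assms by (simp add: field_simps)

lemma sv_alg:
  fixes m :: real
  assumes "0 \<le> m"
  shows "m * (m - 1) / 2 / (m + 1) - (m - 1) * m * (2 * m - 1) / 6 / (m + 1)^2
       = m * (m - 1) * (m + 4) / (6 * (m + 1)^2)"
  using sv_alg0[of "m + 1"] assms by (simp add: power2_eq_square algebra_simps)

lemma ev_alg:
  fixes x A B :: real
  assumes "x \<noteq> 0"
  shows "(T * 6 / x) / 2 * (x * A / (6 * B)) = T / 2 * (A / B)"
  using assms by (cases "B = 0") (simp_all add: field_simps)

lemma main_lim:
  fixes t :: real
  defines "w \<equiv> \<lambda>n::nat. 1 / sqrt (real n / 6)"
  defines "q \<equiv> \<lambda>n i::nat. 1 - real i / real (Suc n)"
  shows "(\<lambda>n. iexp (- (t * w n) * real n / 2) *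
            (\<Prod>i<n. complex_of_real (q n i) * iexp (t * w n) + complex_of_real (1 - q n i)))
         \<longlonglongrightarrow> complex_of_real (exp (- (t^2) / 2))"
proof -
  define th where "th n = t * w n" for n
  define v where "v n i = q n i * (1 - q n i)" for n i
  define P where "P n = (\<Prod>i<n. phi (q n i) (th n))" for n
  define R where "R n = (\<Prod>i<n. complex_of_real (1 - v n i * (th n)^2 / 2))" for n
  define X where "X n = exp (- ((th n)^2 / 2 * (\<Sum>i<n. v n i)))" for n
  have qb: "0 \<le> q n i" "q n i \<le> 1" if "i < n" for n i
    using q_bounds[OF that] unfolding q_def by auto
  have vb: "0 \<le> v n i" "v n i \<le> 1/4" if "i < n" for n i
    using qb[OF that] v_bound[of "q n i"] unfolding v_def by auto
  have w0: "w \<longlonglongrightarrow> 0" unfolding w_def by real_asymp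
  have th0: "th \<longlonglongrightarrow> 0" unfolding th_def using tendsto_mult_right_zero[OF w0, of t] by simp
  have wpos: "w n \<ge> 0" for n unfolding w_def by simp
  have ev_small: "eventually (\<lambda>n. \<bar>th n\<bar> < 1) sequentially"
    using th0 unfolding tendsto_iff by (auto simp: dist_real_def elim!: allE[of _ 1])
  have sumq: "(\<Sum>i<n. q n i) = real n - real n * (real n - 1) / (2 * real (Suc n))" for n
  proof -
    have "(\<Sum>i<n. q n i) = (\<Sum>i<n. 1) - (\<Sum>i<n. real i) / real (Suc n)"
      unfolding q_def by (simp add: sum_subtractf sum_divide_distrib)
    also have "\<dots> = real n - real n * (real n - 1) / (2 * real (Suc n))"
      by (simp add: sum_nat_real)
    finally show ?thesis .
  qed
  have step1: "iexp (- (t * w n) * real n / 2) *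
            (\<Prod>i<n. complex_of_real (q n i) * iexp (t * w n) + complex_of_real (1 - q n i))
        = iexp (th n * (real n / real (Suc n))) * P n" for n
  proof -
    have "(\<Prod>i<n. complex_of_real (q n i) * iexp (t * w n) + complex_of_real (1 - q n i))
        = (\<Prod>i<n. iexp (th n * q n i) * phi (q n i) (th n))"
      unfolding th_def by (intro prod.cong refl) (rule phi_factor)
    also have "\<dots> = (\<Prod>i<n. iexp (th n * q n i)) * P n"
      unfolding P_def by (rule prod.distrib)
    also have "(\<Prod>i<n. iexp (th n * q n i)) = iexp (th n * (\<Sum>i<n. q n i))"
      by (simp add: exp_sum[symmetric] sum_distrib_left sum_distrib_right)
    finally have "(\<Prod>i<n. complex_of_real (q n i) * iexp (t * w n) + complex_of_real (1 - q n i))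
       = iexp (th n * (\<Sum>i<n. q n i)) * P n" .
    moreover have "iexp (- (t * w n) * real n / 2) * iexp (th n * (\<Sum>i<n. q n i)) =
                   iexp (th n * (real n / real (Suc n)))"
    proof -
      have "- (t * w n) * real n / 2 + th n * (\<Sum>i<n. q n i) = th n * (real n / real (Suc n))"
        unfolding sumq th_def by (simp add: field_simps)
      then show ?thesis by (simp add: exp_add[symmetric] algebra_simps)
    qed
    ultimately show ?thesis by (simp add: mult.assoc[symmetric])
  qed
  have E: "(\<lambda>n. iexp (th n * (real n / real (Suc n)))) \<longlonglongrightarrow> 1"
  proof -
    have r: "(\<lambda>n. real n / real (Suc n)) \<longlonglongrightarrow> 1" by real_asymp
    have "(\<lambda>n. th n * (real n / real (Suc n))) \<longlonglongrightarrow> 0 * 1" by (rule tendsto_mult[OF th0 r])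
    then have "(\<lambda>n. iexp (th n * (real n / real (Suc n)))) \<longlonglongrightarrow> iexp 0"
      by (intro isCont_tendsto_compose[OF isCont_iexp]) simp
    then show ?thesis by simp
  qed
  have a: "eventually (\<lambda>n. cmod (P n - R n) \<le> \<bar>t\<bar>^3 / 6 * (real n * w n ^ 3)) sequentially"
    using ev_small
  proof eventually_elim
    case (elim n)
    have "cmod (P n - R n) \<le> (\<Sum>i<n. cmod (phi (q n i) (th n) - complex_of_real (1 - v n i * (th n)^2 / 2)))"
      unfolding P_def R_def
    proof (rule norm_prod_diff)
      fix i assume "i \<in> {..<n}"
      then show "cmod (phi (q n i) (th n)) \<le> 1" using phi_norm qb by auto
      have "(th n)^2 \<le> 1" using elim by (simp add: abs_square_le_1)
      then have "v n i * (th n)^2 / 2 \<le> 1" using vb[of i n] \<open>i \<in> {..<n}\<close>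
          mult_mono[of "v n i" "1/4" "(th n)^2" 1] by auto
      moreover have "0 \<le> v n i * (th n)^2 / 2" using vb[of i n] \<open>i \<in> {..<n}\<close> by auto
      ultimately show "cmod (complex_of_real (1 - v n i * (th n)^2 / 2)) \<le> 1"
        by (simp del: of_real_diff)
    qed
    also have "\<dots> \<le> (\<Sum>i<n. \<bar>th n\<bar>^3 / 6)"
    proof (intro sum_mono)
      fix i assume "i \<in> {..<n}"
      have "complex_of_real (1 - v n i * (th n)^2 / 2) = 1 - q n i * (1 - q n i) * (th n)^2 / 2"
        unfolding v_def by simp
      moreover have i: "i < n" using \<open>i \<in> {..<n}\<close> by simp
      ultimately show "cmod (phi (q n i) (th n) - complex_of_real (1 - v n i * (th n)^2 / 2)) \<le> \<bar>th n\<bar>^3 / 6"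
        unfolding v_def using phi_approx[OF qb[OF i], of "th n"] by simp
    qed
    also have "\<dots> = \<bar>t\<bar>^3 / 6 * (real n * w n ^ 3)"
      using wpos[of n] by (simp add: th_def abs_mult power_mult_distrib)
    finally show ?case .
  qed
  have a0: "(\<lambda>n. \<bar>t\<bar>^3 / 6 * (real n * w n ^ 3)) \<longlonglongrightarrow> 0"
    by (rule tendsto_mult_right_zero) (unfold w_def, real_asymp)
  have b: "eventually (\<lambda>n. norm (R n - complex_of_real (X n)) \<le> t^4 / 64 * (real n * w n ^ 4)) sequentially"
    using ev_small
  proof eventually_elim
    case (elim n)
    have th2: "(th n)^2 \<le> 1" using elim by (simp add: abs_square_le_1)
    have ab: "0 \<le> v n i * (th n)^2 / 2" "v n i * (th n)^2 / 2 \<le> (th n)^2 / 8" if "i < n" for i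
      using vb[OF that] mult_right_mono[of "v n i" "1/4" "(th n)^2"] by auto
    have Xp: "X n = (\<Prod>i<n. exp (- (v n i * (th n)^2 / 2)))"
      unfolding X_def by (simp add: exp_sum[symmetric] sum_negf sum_distrib_left sum_distrib_right sum_divide_distrib algebra_simps)
    have "norm (R n - complex_of_real (X n)) = \<bar>(\<Prod>i<n. 1 - v n i * (th n)^2 / 2) - (\<Prod>i<n. exp (- (v n i * (th n)^2 / 2)))\<bar>"
      by (simp only: R_def Xp of_real_prod[symmetric] of_real_diff[symmetric] norm_of_real)
    also have "\<dots> \<le> (\<Sum>i<n. \<bar>(1 - v n i * (th n)^2 / 2) - exp (- (v n i * (th n)^2 / 2))\<bar>)"
      using norm_prod_diff[of "{..<n}" "\<lambda>i. 1 - v n i * (th n)^2 / 2" "\<lambda>i. exp (- (v n i * (th n)^2 / 2))"]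
      using ab th2 by force
    also have "\<dots> \<le> (\<Sum>i<n. ((th n)^2 / 8)^2)"
    proof (intro sum_mono)
      fix i assume "i \<in> {..<n}"
      then have i: "i < n" by simp
      have "\<bar>(1 - v n i * (th n)^2 / 2) - exp (- (v n i * (th n)^2 / 2))\<bar> \<le> (v n i * (th n)^2 / 2)^2"
        using ab[OF i] th2 by (intro exp_minus_approx) auto
      also have "\<dots> \<le> ((th n)^2 / 8)^2" using ab[OF i] by (intro power_mono) auto
      finally show "\<bar>(1 - v n i * (th n)^2 / 2) - exp (- (v n i * (th n)^2 / 2))\<bar> \<le> ((th n)^2 / 8)^2" .
    qed
    also have "\<dots> = t^4 / 64 * (real n * w n ^ 4)"
      by (simp add: th_def power_mult_distrib power2_eq_square power4_eq_xxxx field_simps)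
    finally show ?case .
  qed
  have b0: "(\<lambda>n. t^4 / 64 * (real n * w n ^ 4)) \<longlonglongrightarrow> 0"
    by (rule tendsto_mult_right_zero) (unfold w_def, real_asymp)
  have c: "X \<longlonglongrightarrow> exp (- (t^2) / 2)"
  proof -
    have sv: "(\<Sum>i<n. v n i) = real n * (real n - 1) * (real n + 4) / (6 * (real n + 1)^2)" for n
    proof -
      have "(\<Sum>i<n. v n i) = (\<Sum>i<n. real i / real (Suc n) - (real i)^2 / (real (Suc n))^2)"
        unfolding v_def q_def by (intro sum.cong refl v_expand) simp
      also have "\<dots> = (\<Sum>i<n. real i) / real (Suc n) - (\<Sum>i<n. (real i)^2) / (real (Suc n))^2"
        by (simp add: sum_subtractf sum_divide_distrib)
      also have "\<dots> = real n * (real n - 1) * (real n + 4) / (6 * (real n + 1)^2)"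
        unfolding sum_nat_real sum_sq_real using sv_alg[of "real n"] by (simp add: add.commute)
      finally show ?thesis .
    qed
    have ev: "eventually (\<lambda>n. (th n)^2 / 2 * (\<Sum>i<n. v n i) = t^2 / 2 * ((real n - 1) * (real n + 4) / (real n + 1)^2)) sequentially"
      using eventually_gt_at_top[of "0::nat"]
    proof eventually_elim
      case (elim n)
      have "(w n)^2 = 6 / real n" unfolding w_def using elim by (simp add: power_divide)
      then have "(th n)^2 = t^2 * 6 / real n" unfolding th_def by (simp add: power_mult_distrib)
      then show ?case unfolding sv using elim ev_alg[of "real n" "t^2" "(real n - 1) * (real n + 4)" "(real n + 1)^2"]
        by (simp add: mult.assoc)
    qed
    have r: "(\<lambda>n. (real n - 1) * (real n + 4) / (real n + 1)^2) \<longlonglongrightarrow> 1" by real_asymp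
    have "(\<lambda>n. exp (- (t^2 / 2 * ((real n - 1) * (real n + 4) / (real n + 1)^2)))) \<longlonglongrightarrow> exp (- (t^2 / 2 * 1))"
      by (intro tendsto_intros r)
    then have "(\<lambda>n. exp (- ((th n)^2 / 2 * (\<Sum>i<n. v n i)))) \<longlonglongrightarrow> exp (- (t^2 / 2 * 1))"
      by (rule Lim_transform_eventually) (use ev in \<open>auto elim: eventually_mono\<close>)
    then show ?thesis unfolding X_def by simp
  qed
  have "(\<lambda>n. P n - R n) \<longlonglongrightarrow> 0" by (rule Lim_null_comparison[OF a a0])
  moreover have "(\<lambda>n. R n - complex_of_real (X n)) \<longlonglongrightarrow> 0" by (rule Lim_null_comparison[OF b b0])
  moreover have "(\<lambda>n. complex_of_real (X n)) \<longlonglongrightarrow> complex_of_real (exp (- (t^2) / 2))"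
    using c by (rule tendsto_of_real)
  ultimately have "(\<lambda>n. (P n - R n) + (R n - complex_of_real (X n)) + complex_of_real (X n))
     \<longlonglongrightarrow> 0 + 0 + complex_of_real (exp (- (t^2) / 2))"
    by (intro tendsto_add)
  then have "P \<longlonglongrightarrow> complex_of_real (exp (- (t^2) / 2))" by simp
  from tendsto_mult[OF E this] show ?thesis unfolding step1 by simp
qed


lemma card_PF:
  "real (card (PF n)) * real (Suc n) = real (Suc n) ^ n" "PF n \<noteq> {}"
proof -
  have "of_nat (Suc n) * (\<Sum>p\<in>PF n. (1::real) ^ lucky p) = (\<Prod>i<n. of_nat (Suc n - i) * 1 + of_nat i)"
    by (rule gf_PF)
  also have "\<dots> = (\<Prod>i<n. real (Suc n))"
    by (intro prod.cong refl) (simp add: of_nat_diff[symmetric] del: of_nat_diff)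
  finally show 1: "real (card (PF n)) * real (Suc n) = real (Suc n) ^ n" by (simp add: mult.commute)
  then show "PF n \<noteq> {}" by (auto simp del: of_nat_Suc)
qed

definition fPF :: "nat \<Rightarrow> nat list \<Rightarrow> real" where
  "fPF n p = (real (lucky p) - real n / 2) / sqrt (real n / 6)"

definition MPF :: "nat \<Rightarrow> real measure" where
  "MPF n = distr (measure_pmf (pmf_of_set (PF n))) borel (fPF n)"

lemma real_distribution_MPF: "real_distribution (MPF n)"
  unfolding MPF_def
  by (intro prob_space.real_distribution_distr prob_space_measure_pmf) simp

lemma char_MPF:
  "char (MPF n) t = iexp (- (t * (1 / sqrt (real n / 6))) * real n / 2) *
     (\<Prod>i<n. complex_of_real (1 - real i / real (Suc n)) * iexp (t * (1 / sqrt (real n / 6)))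
           + complex_of_real (1 - (1 - real i / real (Suc n))))"
proof -
  define w where "w = 1 / sqrt (real n / 6)"
  define z where "z = iexp (t * w)"
  define c where "c = iexp (- (t * w) * real n / 2)"
  have ne: "PF n \<noteq> {}" and fin: "finite (PF n)" using card_PF finite_PF by auto
  have e: "iexp (t * fPF n p) = c * z ^ lucky p" for p
  proof -
    have "t * fPF n p = - (t * w) * real n / 2 + real (lucky p) * (t * w)"
      unfolding fPF_def w_def by (cases "sqrt (real n / 6) = 0") (simp_all add: field_simps)
    then have "iexp (t * fPF n p) = iexp (- (t * w) * real n / 2 + real (lucky p) * (t * w))"
      by simp
    also have "\<dots> = c * iexp (real (lucky p) * (t * w))"
      unfolding c_def exp_add[symmetric] by (rule arg_cong[where f=exp]) (simp add: algebra_simps)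
    also have "iexp (real (lucky p) * (t * w)) = exp (of_nat (lucky p) * (\<i> * complex_of_real (t * w)))"
      by (simp add: algebra_simps)
    finally have "iexp (t * fPF n p) = c * exp (of_nat (lucky p) * (\<i> * complex_of_real (t * w)))" .
    then show ?thesis unfolding z_def exp_of_nat_mult by simp
  qed
  have "char (MPF n) t = (\<Sum>p\<in>PF n. iexp (t * fPF n p)) / of_nat (card (PF n))"
  proof -
    have "char (MPF n) t = (CLINT p|measure_pmf (pmf_of_set (PF n)). iexp (t * fPF n p))"
      unfolding char_def MPF_def by (subst integral_distr) auto
    also have "\<dots> = (\<Sum>p\<in>PF n. pmf (pmf_of_set (PF n)) p *\<^sub>R iexp (t * fPF n p))"
      by (rule integral_measure_pmf) (use ne fin in auto)
    also have "\<dots> = (\<Sum>p\<in>PF n. iexp (t * fPF n p) / of_nat (card (PF n)))"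
      by (intro sum.cong refl) (simp add: ne fin scaleR_conv_of_real field_simps)
    finally show ?thesis by (simp add: sum_divide_distrib)
  qed
  also have "\<dots> = c * (\<Sum>p\<in>PF n. z ^ lucky p) / of_nat (card (PF n))"
    unfolding e by (simp add: sum_distrib_left)
  finally have ch: "char (MPF n) t = c * ((\<Sum>p\<in>PF n. z ^ lucky p) / of_nat (card (PF n)))"
    by simp
  have key: "(\<Sum>p\<in>PF n. z ^ lucky p) / of_nat (card (PF n)) =
     (\<Prod>i<n. complex_of_real (1 - real i / real (Suc n)) * z + complex_of_real (1 - (1 - real i / real (Suc n))))"
  proof -
    have gf: "of_nat (Suc n) * (\<Sum>p\<in>PF n. z ^ lucky p) = (\<Prod>i<n. of_nat (Suc n - i) * z + of_nat i)"
      by (rule gf_PF)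
    have "(\<Prod>i<n. complex_of_real (1 - real i / real (Suc n)) * z + complex_of_real (1 - (1 - real i / real (Suc n))))
        = (\<Prod>i<n. (of_nat (Suc n - i) * z + of_nat i) / of_nat (Suc n))"
    proof (intro prod.cong refl)
      fix i assume "i \<in> {..<n}"
      then have "i \<le> Suc n" by simp
      then have "complex_of_real (1 - real i / real (Suc n)) = of_nat (Suc n - i) / of_nat (Suc n)"
        by (simp add: of_nat_diff field_simps del: of_nat_Suc)
      moreover have "complex_of_real (1 - (1 - real i / real (Suc n))) = of_nat i / of_nat (Suc n)"
        by simp
      ultimately show "complex_of_real (1 - real i / real (Suc n)) * z + complex_of_real (1 - (1 - real i / real (Suc n)))
          = (of_nat (Suc n - i) * z + of_nat i) / of_nat (Suc n)"
        by (simp add: add_divide_distrib)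
    qed
    also have "\<dots> = (\<Prod>i<n. of_nat (Suc n - i) * z + of_nat i) / of_nat (Suc n) ^ n"
      by (simp add: prod_dividef)
    also have "\<dots> = of_nat (Suc n) * (\<Sum>p\<in>PF n. z ^ lucky p) / of_nat (Suc n) ^ n"
      by (simp only: gf)
    also have "of_nat (Suc n) ^ n = of_nat (card (PF n)) * (of_nat (Suc n) :: complex)"
    proof -
      have "real (Suc n) ^ n = real (card (PF n)) * real (Suc n)" using card_PF(1) by simp
      then have "complex_of_real (real (Suc n) ^ n) = complex_of_real (real (card (PF n)) * real (Suc n))"
        by simp
      then show ?thesis by simp
    qed
    also have "of_nat (Suc n) * (\<Sum>p\<in>PF n. z ^ lucky p) / (of_nat (card (PF n)) * of_nat (Suc n)) =
       (\<Sum>p\<in>PF n. z ^ lucky p) / (of_nat (card (PF n)) :: complex)"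
      by (simp del: of_nat_Suc)
    finally show ?thesis by simp
  qed
  show ?thesis unfolding ch key unfolding c_def z_def w_def ..
qed

lemma normal_singleton: "{x} \<in> null_sets std_normal_distribution"
proof -
  have "AE t in lborel. t \<in> {x} \<longrightarrow> std_normal_density t = 0"
    using AE_lborel_singleton[of x] by eventually_elim auto
  then show ?thesis by (subst null_sets_density_iff) auto
qed

lemma normal_cdf:
  "cdf std_normal_distribution x = (LBINT t=-\<infinity>..ereal x. exp (- t\<^sup>2 / 2) / sqrt (2 * pi))"
proof -
  let ?G = "std_normal_distribution"
  interpret G: real_distribution ?G by (rule real_dist_normal_dist)
  have "cdf ?G x = measure ?G ({..<x} \<union> {x})"
    unfolding cdf_def by (intro arg_cong[where f="measure ?G"]) auto
  also have "\<dots> = measure ?G {..<x}"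
    by (rule measure_Un_null_set) (auto simp: normal_singleton)
  also have "\<dots> = integral\<^sup>L ?G (indicator {..<x})"
    by simp
  also have "\<dots> = (LINT t|lborel. std_normal_density t *\<^sub>R indicator {..<x} t)"
    by (rule integral_density) auto
  also have "\<dots> = (LBINT t=-\<infinity>..ereal x. exp (- t\<^sup>2 / 2) / sqrt (2 * pi))"
  proof -
    have "einterval (-\<infinity>) (ereal x) = {..<x}" by (auto simp: einterval_def)
    then show ?thesis
      unfolding interval_lebesgue_integral_def set_lebesgue_integral_def
      by (auto intro!: Bochner_Integration.integral_cong simp: std_normal_density_def split: split_indicator)
  qed
  finally show ?thesis .
qed

lemma cdf_MPF:
  "cdf (MPF n) x = real (card {p \<in> PF n. (real (lucky p) - real n / 2) / sqrt (real n / 6) \<le> x})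
              / real (card (PF n))"
proof -
  have ne: "PF n \<noteq> {}" and fin: "finite (PF n)" using card_PF finite_PF by auto
  have "cdf (MPF n) x = measure (measure_pmf (pmf_of_set (PF n))) (fPF n -` {..x})"
    unfolding cdf_def MPF_def by (subst measure_distr) auto
  also have "\<dots> = real (card (PF n \<inter> fPF n -` {..x})) / real (card (PF n))"
    by (rule measure_pmf_of_set[OF ne fin])
  also have "PF n \<inter> fPF n -` {..x} = {p \<in> PF n. (real (lucky p) - real n / 2) / sqrt (real n / 6) \<le> x}"
    unfolding fPF_def by auto
  finally show ?thesis .
qed

theorem mainTheorem11:
  fixes x :: real
  shows "(\<lambda>n. real (card {p \<in> PF n. (real (lucky p) - real n / 2) / sqrt (real n / 6) \<le> x})
              / real (card (PF n)))
         \<longlonglongrightarrow> (LBINT t=-\<infinity>..ereal x. exp (- t\<^sup>2 / 2) / sqrt (2 * pi))"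
proof -
  let ?G = "std_normal_distribution"
  have wc: "weak_conv_m MPF ?G"
  proof (rule levy_continuity[OF real_distribution_MPF real_dist_normal_dist])
    fix t
    show "(\<lambda>n. char (MPF n) t) \<longlonglongrightarrow> char ?G t"
      unfolding char_MPF char_std_normal_distribution using main_lim[of t] by (simp only:)
  qed
  have isc: "isCont (cdf ?G) x"
  proof -
    interpret G: real_distribution ?G by (rule real_dist_normal_dist)
    have "measure ?G {x} = 0" using normal_singleton[of x] by (simp add: measure_def null_setsD1)
    then show ?thesis by (simp add: G.isCont_cdf)
  qed
  have "(\<lambda>n. cdf (MPF n) x) \<longlonglongrightarrow> cdf ?G x"
    using wc isc unfolding weak_conv_m_def weak_conv_def by blast
  then show ?thesis unfolding cdf_MPF normal_cdf .
qed

end
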